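(* For $n \ge 3$, if $n \pmod 6 \notin \{2,4\}$, then the path $P_n$ is not $\gamma_{\rm tg}$-critical.
   Context: Total domination game: Dominator and Staller alternately choose vertices, each chosen vertex must be adjacent to some vertex not yet totally dominated; the game ends when no legal move exists; Dominator minimizes, Staller maximizes the number of moves; $\gamma_{\rm tg}(G)$ is the number of moves in the Dominator-start game under optimal play. $G|v$ is $G$ with $v$ declared already totally dominated, with $\gamma_{\rm tg}(G|v)$ defined analogously. $G$ is $\gamma_{\rm tg}$-critical if $\gamma_{\rm tg}(G|v)<\gamma_{\rm tg}(G)$ for all vertices $v$. *)

theory Defs
  imports Main
begin

text \<open>A finite graph is given by its vertex set V and open-neighbourhood map N
  (N v \<subseteq> V, symmetric, irreflexive). A game state is the set D of vertices that are
  already totally dominated. The value below is the number of remaining moves under optimal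
  play (Dominator minimises, Staller maximises). The fuel argument k bounds the recursion;
  since every move totally dominates at least one new vertex of V, fuel card V is never
  exhausted, so it does not affect the value.\<close>

fun tg_val :: "'a set \<Rightarrow> ('a \<Rightarrow> 'a set) \<Rightarrow> 'a set \<Rightarrow> bool \<Rightarrow> nat \<Rightarrow> nat" where
  "tg_val V N D dom_turn 0 = 0"
| "tg_val V N D dom_turn (Suc k) =
     (let M = {v \<in> V. N v - D \<noteq> {}} in
      if M = {} then 0
      else if dom_turn then Suc (Min ((\<lambda>v. tg_val V N (D \<union> N v) False k) ` M))
      else Suc (Max ((\<lambda>v. tg_val V N (D \<union> N v) True k) ` M)))"

definition gamma_tg :: "'a set \<Rightarrow> ('a \<Rightarrow> 'a set) \<Rightarrow> nat" where
  "gamma_tg V N = tg_val V N {} True (card V)"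

text \<open>gamma_tg(G|v): Dominator-start game with v declared already totally dominated.\<close>
definition gamma_tg_cond :: "'a set \<Rightarrow> ('a \<Rightarrow> 'a set) \<Rightarrow> 'a \<Rightarrow> nat" where
  "gamma_tg_cond V N v = tg_val V N {v} True (card V)"

definition gamma_tg_critical :: "'a set \<Rightarrow> ('a \<Rightarrow> 'a set) \<Rightarrow> bool" where
  "gamma_tg_critical V N \<longleftrightarrow> (\<forall>v\<in>V. gamma_tg_cond V N v < gamma_tg V N)"

definition path_nbr :: "nat \<Rightarrow> nat \<Rightarrow> nat set" where
  "path_nbr n i = {j. j < n \<and> i < n \<and> (j + 1 = i \<or> i + 1 = j)}"

end

theory Submission
  imports Defs
begin

lemma tg_val_formula:
  fixes V :: "'a set" and N :: "'a \<Rightarrow> 'a set" and Psi :: "'a set \<Rightarrow> nat"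
  assumes finV: "finite V" and NV: "\<And>v. v \<in> V \<Longrightarrow> N v \<subseteq> V"
  and term0: "\<And>D. D \<subseteq> V \<Longrightarrow> {v\<in>V. N v - D \<noteq> {}} = {} \<Longrightarrow> Psi D = 0"
  and step: "\<And>D v. D \<subseteq> V \<Longrightarrow> v \<in> V \<Longrightarrow> N v - D \<noteq> {} \<Longrightarrow>
       Psi (D \<union> N v) + 1 \<le> Psi D \<and> Psi D \<le> Psi (D \<union> N v) + 3"
  and ex_hi: "\<And>D. D \<subseteq> V \<Longrightarrow> {v\<in>V. N v - D \<noteq> {}} \<noteq> {} \<Longrightarrow>
       \<exists>v\<in>V. N v - D \<noteq> {} \<and> Psi (D \<union> N v) + 2 \<le> Psi D"
  and ex_lo: "\<And>D. D \<subseteq> V \<Longrightarrow> {v\<in>V. N v - D \<noteq> {}} \<noteq> {} \<Longrightarrow>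
       \<exists>v\<in>V. N v - D \<noteq> {} \<and> Psi D \<le> Psi (D \<union> N v) + 2"
  and ex3: "\<And>D. D \<subseteq> V \<Longrightarrow> odd (Psi D) \<Longrightarrow>
       \<exists>v\<in>V. N v - D \<noteq> {} \<and> Psi D = Psi (D \<union> N v) + 3"
  and ex1: "\<And>D. D \<subseteq> V \<Longrightarrow> odd (Psi D) \<Longrightarrow>
       \<exists>v\<in>V. N v - D \<noteq> {} \<and> Psi D = Psi (D \<union> N v) + 1"
  shows "D \<subseteq> V \<Longrightarrow> card (V - D) \<le> k \<Longrightarrow>
     tg_val V N D t k = (if t then Psi D div 2 else (Psi D + 1) div 2)"
proof (induction k arbitrary: D t)
  case 0
  then have "V \<subseteq> D" using finV by auto
  then have "{v\<in>V. N v - D \<noteq> {}} = {}" using NV by blast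
  then have "Psi D = 0" using term0 0 by blast
  then show ?case by simp
next
  case (Suc k)
  define M where "M = {v\<in>V. N v - D \<noteq> {}}"
  have finM: "finite M" using finV unfolding M_def by simp
  show ?case
  proof (cases "M = {}")
    case True
    then have "Psi D = 0" using term0 Suc.prems unfolding M_def by blast
    then show ?thesis using True by (simp add: M_def)
  next
    case False
    have IH: "tg_val V N (D \<union> N v) t' k =
        (if t' then Psi (D \<union> N v) div 2 else (Psi (D \<union> N v) + 1) div 2)" if "v \<in> M" for v t'
    proof (rule Suc.IH)
      show "D \<union> N v \<subseteq> V" using that NV Suc.prems unfolding M_def by blast
      have "V - (D \<union> N v) \<subset> V - D" using that NV unfolding M_def by blast
      then have "card (V - (D \<union> N v)) < card (V - D)" using finV by (simp add: psubset_card_mono)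
      then show "card (V - (D \<union> N v)) \<le> k" using Suc.prems by simp
    qed
    have stepM: "Psi (D \<union> N v) + 1 \<le> Psi D \<and> Psi D \<le> Psi (D \<union> N v) + 3" if "v \<in> M" for v
      using step[OF Suc.prems(1)] that unfolding M_def by blast
    show ?thesis
    proof (cases t)
      case True
      have img: "(\<lambda>v. tg_val V N (D \<union> N v) False k) ` M = (\<lambda>v. (Psi (D \<union> N v) + 1) div 2) ` M"
        using IH by (intro image_cong) auto
      have "Min ((\<lambda>v. (Psi (D \<union> N v) + 1) div 2) ` M) = Psi D div 2 - 1"
      proof (rule Min_eqI)
        show "finite ((\<lambda>v. (Psi (D \<union> N v) + 1) div 2) ` M)" using finM by simp
        show "y \<ge> Psi D div 2 - 1" if "y \<in> (\<lambda>v. (Psi (D \<union> N v) + 1) div 2) ` M" for y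
          using that stepM by fastforce
        show "Psi D div 2 - 1 \<in> (\<lambda>v. (Psi (D \<union> N v) + 1) div 2) ` M"
        proof (cases "odd (Psi D)")
          case True
          then obtain v where "v \<in> V" "N v - D \<noteq> {}" "Psi D = Psi (D \<union> N v) + 3"
            using ex3 Suc.prems by blast
          then show ?thesis unfolding M_def using True
            by (intro image_eqI[of _ _ v]) (presburger, auto)
        next
          case ev: False
          obtain v where "v \<in> V" "N v - D \<noteq> {}" "Psi (D \<union> N v) + 2 \<le> Psi D"
            using ex_hi Suc.prems False unfolding M_def by blast
          moreover have "Psi D \<le> Psi (D \<union> N v) + 3" using stepM calculation unfolding M_def by blast
          ultimately show ?thesis unfolding M_def using ev
            by (intro image_eqI[of _ _ v]) (presburger, auto)
        qed
      qed
      moreover have "Psi D \<ge> 2" using ex_hi[OF Suc.prems(1)] False unfolding M_def by force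
      moreover have "tg_val V N D t (Suc k) = Suc (Min ((\<lambda>v. tg_val V N (D \<union> N v) False k) ` M))"
        unfolding tg_val.simps Let_def M_def[symmetric] using False True by simp
      ultimately show ?thesis using True img by (simp del: tg_val.simps)
    next
      case Fa: False
      have img: "(\<lambda>v. tg_val V N (D \<union> N v) True k) ` M = (\<lambda>v. Psi (D \<union> N v) div 2) ` M"
        using IH by (intro image_cong) auto
      have "Max ((\<lambda>v. Psi (D \<union> N v) div 2) ` M) = (Psi D + 1) div 2 - 1"
      proof (rule Max_eqI)
        show "finite ((\<lambda>v. Psi (D \<union> N v) div 2) ` M)" using finM by simp
        show "y \<le> (Psi D + 1) div 2 - 1" if "y \<in> (\<lambda>v. Psi (D \<union> N v) div 2) ` M" for y
          using that stepM by fastforce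
        show "(Psi D + 1) div 2 - 1 \<in> (\<lambda>v. Psi (D \<union> N v) div 2) ` M"
        proof (cases "odd (Psi D)")
          case True
          then obtain v where "v \<in> V" "N v - D \<noteq> {}" "Psi D = Psi (D \<union> N v) + 1"
            using ex1 Suc.prems by blast
          then show ?thesis unfolding M_def using True
            by (intro image_eqI[of _ _ v]) (presburger, auto)
        next
          case ev: False
          obtain v where "v \<in> V" "N v - D \<noteq> {}" "Psi D \<le> Psi (D \<union> N v) + 2"
            using ex_lo Suc.prems False unfolding M_def by blast
          moreover have "Psi (D \<union> N v) + 1 \<le> Psi D" using stepM calculation unfolding M_def by blast
          ultimately show ?thesis unfolding M_def using ev
            by (intro image_eqI[of _ _ v]) (presburger, auto)
        qed
      qed
      moreover have "Psi D \<ge> 1" using stepM False by fastforce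
      moreover have "tg_val V N D t (Suc k) = Suc (Max ((\<lambda>v. tg_val V N (D \<union> N v) True k) ` M))"
        unfolding tg_val.simps Let_def M_def[symmetric] using False Fa by simp
      ultimately show ?thesis using Fa img by (simp del: tg_val.simps)
    qed
  qed
qed

definition rv :: "nat \<Rightarrow> bool \<Rightarrow> bool \<Rightarrow> nat" where
  "rv L a b = 2 * (L - (L + 1) div 3) + (if L mod 3 = 2 \<and> (a \<or> b) then 1 else 0)"

fun ps :: "bool \<Rightarrow> nat \<Rightarrow> bool list \<Rightarrow> bool \<Rightarrow> nat" where
  "ps a L [] b = rv L a b"
| "ps a L (x # w) b = (if x then ps a (Suc L) w b else rv L a True + ps True 0 w b)"

fun wmv :: "nat \<Rightarrow> bool list \<Rightarrow> bool list" where
  "wmv _ [] = []"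
| "wmv 0 (x # w) = False # w"
| "wmv (Suc 0) (x # w) = False # wmv 0 w"
| "wmv (Suc (Suc k)) (x # w) = x # wmv (Suc k) w"

lemma rv0[simp]: "rv 0 a b = 0" by (simp add: rv_def)

lemma ps_append_False: "ps a L (xs @ False # ys) b = ps a L xs True + ps True 0 ys b"
  by (induction xs arbitrary: a L) auto

lemma ps_rep: "ps a L (replicate q True @ ys) b = ps a (L + q) ys b"
  by (induction q arbitrary: L) auto

lemma ps_xs: "xs = [] \<or> last xs = False \<Longrightarrow>
   ps a 0 (xs @ zs) b = (if xs = [] then 0 else ps a 0 (butlast xs) True) + ps (xs \<noteq> [] \<or> a) 0 zs b"
proof (cases "xs = []")
  case False
  assume "xs = [] \<or> last xs = False"
  with False obtain xs0 where e: "xs = xs0 @ [False]" by (metis append_butlast_last_id)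
  then show ?thesis by (simp add: ps_append_False)
qed simp

lemma ps_rep_nil: "ps a L (replicate q True) b = rv (L + q) a b"
  using ps_rep[of a L q "[]" b] by simp

lemma ps_ys: "ys = [] \<or> hd ys = False \<Longrightarrow>
   ps c L ys b = rv L c (ys \<noteq> [] \<or> b) + (if ys = [] then 0 else ps True 0 (tl ys) b)"
  by (cases ys) auto

lemma wmv_len[simp]: "length (wmv k w) = length w"
  by (induction k w rule: wmv.induct) auto

lemma wmv_nth: "i < length w \<Longrightarrow> wmv k w ! i = (w ! i \<and> i + 1 \<noteq> k \<and> i \<noteq> k)"
proof (induction k w arbitrary: i rule: wmv.induct)
  case (2 x w) then show ?case by (cases i) auto
next
  case (3 x w) then show ?case by (cases i) (auto simp: nth_Cons' wmv_len)
next
  case (4 k x w) then show ?case by (cases i) auto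
qed simp

lemma wmv0_nth: "i < length w \<Longrightarrow> wmv 0 w ! i = (w ! i \<and> i \<noteq> 0)"
  using wmv_nth by simp

lemma wmv_append: "1 \<le> k \<Longrightarrow> wmv (length xs + k) (xs @ ys) = xs @ wmv k ys"
proof (induction xs)
  case (Cons x xs)
  then obtain m where "length xs + k = Suc m" by (cases "length xs + k") auto
  then show ?case using Cons by simp
qed simp

lemma wmv_rep: "wmv (Suc L) (replicate (Suc L) True @ ys) = replicate L True @ False # wmv 0 ys"
proof (induction L)
  case (Suc L) then show ?case by simp
qed simp

lemma wmv0_rep: "wmv 0 (replicate (Suc L) True @ ys) = False # replicate L True @ ys"
  by simp

lemma wmv0_fix: "ys = [] \<or> hd ys = False \<Longrightarrow> wmv 0 ys = ys"
  by (cases ys) auto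

definition wm :: "nat \<Rightarrow> nat \<Rightarrow> bool list" where
  "wm M j = (if M = 0 then [] else if j = 0 then False # replicate (M - 1) True
     else if j = M then replicate (M - 1) True @ [False]
     else replicate (j - 1) True @ False # False # replicate (M - j - 1) True)"

lemma wmv_xs: "xs = [] \<or> last xs = False \<Longrightarrow> wmv (length xs) (xs @ zs) = xs @ wmv 0 zs"
proof (cases "xs = []")
  case False
  assume "xs = [] \<or> last xs = False"
  with False obtain xs0 where e: "xs = xs0 @ [False]" by (metis append_butlast_last_id)
  have "wmv (length xs0 + 1) (xs0 @ (False # zs)) = xs0 @ wmv 1 (False # zs)"
    by (rule wmv_append) simp
  then show ?thesis using e by simp
qed simp

lemma core_wmv:
  assumes xs: "xs = [] \<or> last xs = False" and ys: "ys = [] \<or> hd ys = False" and j: "j \<le> M"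
  shows "wmv (length xs + j) (xs @ replicate M True @ ys) = xs @ wm M j @ ys"
proof (cases "j = 0")
  case True
  then show ?thesis using wmv_xs[OF xs] wmv0_fix[OF ys]
    by (cases M) (auto simp: wm_def)
next
  case False
  then obtain i where i: "j = Suc i" by (cases j) auto
  have rep: "replicate M True @ ys = replicate (Suc i) True @ (replicate (M - j) True @ ys)"
  proof -
    have "replicate M True = replicate (Suc i) True @ replicate (M - j) True"
      using j i by (metis le_add_diff_inverse replicate_add)
    then show ?thesis by simp
  qed
  have "wmv (length xs + j) (xs @ replicate M True @ ys) = xs @ wmv j (replicate M True @ ys)"
    using False by (intro wmv_append) simp
  also have "\<dots> = xs @ replicate i True @ False # wmv 0 (replicate (M - j) True @ ys)"
    unfolding rep i using wmv_rep by simp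
  also have "\<dots> = xs @ wm M j @ ys"
  proof (cases "M - j")
    case 0
    then have "M = j" using j by simp
    then show ?thesis using 0 i wmv0_fix[OF ys] by (simp add: wm_def)
  next
    case (Suc r)
    then show ?thesis using i j by (simp add: wm_def)
  qed
  finally show ?thesis .
qed

definition rvm :: "nat \<Rightarrow> nat \<Rightarrow> bool \<Rightarrow> bool \<Rightarrow> nat" where
  "rvm M j a b = (if M = 0 then 0 else if j = 0 then rv (M - 1) True b
     else if j = M then rv (M - 1) a True else rv (j - 1) a True + rv (M - j - 1) True b)"

lemma core_ps:
  fixes a b :: bool and xs ys :: "bool list" and j M :: nat
  assumes xs: "xs = [] \<or> last xs = False" and ys: "ys = [] \<or> hd ys = False" and j: "j \<le> M"
  defines "P \<equiv> (if xs = [] then 0 else ps a 0 (butlast xs) True)"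
    and "Q \<equiv> (if ys = [] then 0 else ps True 0 (tl ys) b)"
    and "a' \<equiv> (xs \<noteq> [] \<or> a)" and "b' \<equiv> (ys \<noteq> [] \<or> b)"
  shows "ps a 0 (xs @ replicate M True @ ys) b = P + rv M a' b' + Q"
    and "ps a 0 (xs @ wm M j @ ys) b = P + rvm M j a' b' + Q"
proof -
  have Y: "ps c L ys b = rv L c b' + Q" for c L using ps_ys[OF ys] unfolding Q_def b'_def by simp
  have Y0: "ps True 0 ys b = Q" using Y[of True 0] by simp
  show "ps a 0 (xs @ replicate M True @ ys) b = P + rv M a' b' + Q"
    using ps_xs[OF xs] unfolding P_def a'_def by (simp add: ps_rep Y)
  have "ps a' 0 (wm M j @ ys) b = rvm M j a' b' + Q"
  proof -
    consider "M = 0" | "M \<noteq> 0" "j = 0" | "M \<noteq> 0" "j \<noteq> 0" "j = M" | "M \<noteq> 0" "j \<noteq> 0" "j \<noteq> M" by blast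
    then show ?thesis
    proof cases
      case 1 then show ?thesis by (simp add: wm_def rvm_def Y)
    next
      case 2 then show ?thesis by (simp add: wm_def rvm_def ps_rep Y)
    next
      case 3 then show ?thesis by (simp add: wm_def rvm_def ps_rep ps_rep_nil ps_append_False Y0)
    next
      case 4
      then have "wm M j @ ys = replicate (j - 1) True @ False # False # replicate (M - j - 1) True @ ys"
        by (simp add: wm_def)
      then show ?thesis using 4 by (simp add: rvm_def ps_rep Y)
    qed
  qed
  then show "ps a 0 (xs @ wm M j @ ys) b = P + rvm M j a' b' + Q"
    using ps_xs[OF xs] unfolding P_def a'_def by simp
qed

lemma rv_step: "rv (L + 3) a b = rv L a b + 4"
proof -
  have d: "(L + 3 + 1) div 3 = (L + 1) div 3 + 1"
    using div_add_self2[of 3 "L + 1"] by (simp add: add.commute add.left_commute)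
  have "(L + 1) div 3 \<le> L" by linarith
  moreover have "(L + 3) mod 3 = L mod 3" by simp
  ultimately show ?thesis unfolding rv_def d by simp
qed

lemma rv_3k: "rv (3 * k + r) a b = 4 * k + rv r a b"
proof (induction k)
  case (Suc k)
  have e: "3 * Suc k + r = (3 * k + r) + 3" by simp
  show ?case unfolding e rv_step Suc.IH by simp
qed simp

lemma red2:
  fixes x y :: nat and P :: "nat \<Rightarrow> nat \<Rightarrow> bool"
  assumes base: "\<And>x y. x < 3 \<Longrightarrow> y < 3 \<Longrightarrow> P x y"
    and sx: "\<And>x y. P x y \<Longrightarrow> P (x + 3) y" and sy: "\<And>x y. P x y \<Longrightarrow> P x (y + 3)"
  shows "P x y"
proof (induction x arbitrary: y rule: less_induct)
  case (less x)
  show ?case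
  proof (cases "x < 3")
    case False
    then have "P (x - 3) y" using less by simp
    then show ?thesis using sx[of "x - 3" y] False by simp
  next
    case xs: True
    show ?thesis
    proof (induction y rule: less_induct)
      case (less y)
      show ?case
      proof (cases "y < 3")
        case True then show ?thesis using base xs by simp
      next
        case False
        then have "P x (y - 3)" using less by simp
        then show ?thesis using sy[of x "y - 3"] False by simp
      qed
    qed
  qed
qed

lemma less3: "(x::nat) < 3 \<Longrightarrow> x = 0 \<or> x = 1 \<or> x = 2" by arith

lemma K1: "rv x a True + rv y True b + 1 \<le> rv (x + y + 2) a b \<and>
           rv (x + y + 2) a b \<le> rv x a True + rv y True b + 3"
proof (induction x y rule: red2)
  case (1 x y)
  then show ?case
    apply -
    apply (drule less3)+
    apply (elim disjE; simp add: rv_def)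
    done
next
  case (2 x y)
  have e: "x + 3 + y + 2 = (x + y + 2) + 3" by simp
  have "rv (x + 3 + y + 2) a b = rv (x + y + 2) a b + 4" unfolding e by (rule rv_step)
  moreover have "rv (x + 3) a True = rv x a True + 4" by (rule rv_step)
  ultimately show ?case using 2 by linarith
next
  case (3 x y)
  have e: "x + (y + 3) + 2 = (x + y + 2) + 3" by simp
  have "rv (x + (y + 3) + 2) a b = rv (x + y + 2) a b + 4" unfolding e by (rule rv_step)
  moreover have "rv (y + 3) True b = rv y True b + 4" by (rule rv_step)
  ultimately show ?case using 3 by linarith
qed

lemma K2: "rv x True b + 1 \<le> rv (x + 1) True b \<and> rv (x + 1) True b \<le> rv x True b + 3"
proof (induction x rule: less_induct)
  case (less x)
  show ?case
  proof (cases "x < 3")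
    case True then show ?thesis
      apply -
      apply (drule less3)
      apply (elim disjE; simp add: rv_def)
      done
  next
    case False
    then obtain z where z: "x = z + 3" by (metis add.commute le_Suc_ex not_less)
    then have "rv z True b + 1 \<le> rv (z + 1) True b \<and> rv (z + 1) True b \<le> rv z True b + 3"
      using less by simp
    moreover have "rv x True b = rv z True b + 4" using z by (simp add: rv_step)
    moreover have "rv (x + 1) True b = rv (z + 1) True b + 4"
      using z rv_step[of "z + 1" True b] by (simp add: add.commute add.left_commute)
    ultimately show ?thesis by linarith
  qed
qed

lemma rv_sym: "rv L a b = rv L b a" unfolding rv_def by auto

lemma rv_T: "a \<Longrightarrow> rv L a b = rv L True b" unfolding rv_def by auto

lemma run_drop:
  assumes "1 \<le> M" "j \<le> M" "j = 0 \<longrightarrow> a" "j = M \<longrightarrow> b"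
  shows "rvm M j a b + 1 \<le> rv M a b \<and> rv M a b \<le> rvm M j a b + 3"
proof -
  consider "j = 0" | "j \<noteq> 0" "j = M" | "j \<noteq> 0" "j \<noteq> M" by blast
  then show ?thesis
  proof cases
    case 1
    then have M: "M = (M - 1) + 1" and a using assms by auto
    have "rvm M j a b = rv (M - 1) True b" using 1 assms unfolding rvm_def by simp
    moreover have "rv M a b = rv ((M - 1) + 1) True b" using M rv_T[OF \<open>a\<close>] by simp
    ultimately show ?thesis using K2[of "M - 1" b] by simp
  next
    case 2
    then have M: "M = (M - 1) + 1" and b using assms by auto
    have "rvm M j a b = rv (M - 1) True a" using 2 assms rv_sym unfolding rvm_def by simp
    moreover have "rv M a b = rv ((M - 1) + 1) True a" using M rv_T[OF \<open>b\<close>] rv_sym by metis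
    ultimately show ?thesis using K2[of "M - 1" a] by simp
  next
    case 3
    define x where "x = j - 1"
    define y where "y = M - j - 1"
    have M: "M = x + y + 2" using assms 3 unfolding x_def y_def by simp
    have "rvm M j a b = rv x a True + rv y True b" using 3 assms unfolding rvm_def x_def y_def by simp
    moreover have "rv M a b = rv (x + y + 2) a b" using M by simp
    ultimately show ?thesis using K1[of x a y b] by simp
  qed
qed

lemma decomp3: "\<exists>k. (M::nat) = 3 * k + M mod 3" by (metis div_mult_mod_eq mult.commute)

lemma run_hi:
  assumes "1 \<le> M" "2 \<le> M \<or> a \<or> b"
  shows "\<exists>j\<le>M. (j = 0 \<longrightarrow> a) \<and> (j = M \<longrightarrow> b) \<and> rvm M j a b + 2 \<le> rv M a b"
proof (cases "M = 1")
  case True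
  show ?thesis
  proof (cases a)
    case True
    then show ?thesis using \<open>M = 1\<close> by (intro exI[of _ 0]) (simp add: rvm_def rv_def)
  next
    case False
    then show ?thesis using \<open>M = 1\<close> assms by (intro exI[of _ 1]) (simp add: rvm_def rv_def)
  qed
next
  case False
  obtain k where k: "M - 2 = 3 * k + (M - 2) mod 3" using decomp3 by blast
  have "(M - 2) mod 3 < 3" by simp
  then consider "(M - 2) mod 3 = 0" | "(M - 2) mod 3 = 1" | "(M - 2) mod 3 = 2" by linarith
  then have "rv (M - 2) True b + 2 \<le> rv M a b"
  proof cases
    case 1
    then have "M - 2 = 3 * k" "M = 3 * k + 2" using k False assms by simp_all
    then show ?thesis using rv_3k[of k 0 True b] rv_3k[of k 2 a b] by (simp add: rv_def)
  next
    case 2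
    then have "M - 2 = 3 * k + 1" "M = 3 * k + 3" using k False assms by simp_all
    then show ?thesis using rv_3k[of k 1 True b] rv_3k[of k 3 a b] by (simp add: rv_def)
  next
    case 3
    then have "M - 2 = 3 * k + 2" "M = 3 * k + 4" using k False assms by simp_all
    then show ?thesis using rv_3k[of k 2 True b] rv_3k[of k 4 a b] by (simp add: rv_def)
  qed
  then show ?thesis using False assms by (intro exI[of _ 1]) (auto simp: rvm_def numeral_2_eq_2)
qed

lemma run_lo:
  assumes "1 \<le> M" "2 \<le> M \<or> a \<or> b"
  shows "\<exists>j\<le>M. (j = 0 \<longrightarrow> a) \<and> (j = M \<longrightarrow> b) \<and> rv M a b \<le> rvm M j a b + 2"
proof -
  consider "M = 1" | "M = 2" | "M \<ge> 3" using assms by linarith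
  then show ?thesis
  proof cases
    case 1
    show ?thesis
    proof (cases a)
      case True
      then show ?thesis using 1 by (intro exI[of _ 0]) (simp add: rvm_def rv_def)
    next
      case False
      then show ?thesis using 1 assms by (intro exI[of _ 1]) (simp add: rvm_def rv_def)
    qed
  next
    case 2
    show ?thesis
    proof (cases a)
      case True
      then show ?thesis using 2 by (intro exI[of _ 0]) (simp add: rvm_def rv_def)
    next
      case na: False
      show ?thesis
      proof (cases b)
        case True
        then show ?thesis using 2 by (intro exI[of _ 2]) (simp add: rvm_def rv_def)
      next
        case False
        then show ?thesis using 2 na by (intro exI[of _ 1]) (simp add: rvm_def rv_def)
      qed
    qed
  next
    case 3
    obtain k where k: "M - 3 = 3 * k + (M - 3) mod 3" using decomp3 by blast
    have "(M - 3) mod 3 < 3" by simp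
    then consider "(M - 3) mod 3 = 0" | "(M - 3) mod 3 = 1" | "(M - 3) mod 3 = 2" by linarith
    then show ?thesis
    proof cases
      case 1
      then have M: "M = 3 * k + 3" using k 3 by simp
      have "rvm M 1 a b = rv (3 * k + 1) True b" using M by (simp add: rvm_def)
      then show ?thesis using M rv_3k[of k 1 True b] rv_3k[of k 3 a b]
        by (intro exI[of _ 1]) (simp add: rv_def)
    next
      case 2
      then have M: "M = 3 * k + 4" using k 3 by simp
      have "rvm M 2 a b = rv 1 a True + rv (3 * k + 1) True b" using M by (simp add: rvm_def)
      then show ?thesis using M rv_3k[of k 1 True b] rv_3k[of k 4 a b]
        by (intro exI[of _ 2]) (simp add: rv_def)
    next
      case 3
      then have M: "M = 3 * k + 5" using k \<open>M \<ge> 3\<close> by simp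
      have "rvm M 3 a b = rv 2 a True + rv (3 * k + 1) True b" using M by (simp add: rvm_def)
      then show ?thesis using M rv_3k[of k 1 True b] rv_3k[of k 5 a b]
        by (intro exI[of _ 3]) (simp add: rv_def)
    qed
  qed
qed

lemma run_3:
  assumes "M mod 3 = 2" "a \<or> b"
  shows "\<exists>j\<le>M. (j = 0 \<longrightarrow> a) \<and> (j = M \<longrightarrow> b) \<and> rv M a b = rvm M j a b + 3"
proof -
  obtain k where M: "M = 3 * k + 2" using decomp3[of M] assms by auto
  have "rvm M 1 a b = rv (3 * k) True b" using M by (simp add: rvm_def)
  then show ?thesis using M assms rv_3k[of k 0 True b] rv_3k[of k 2 a b]
    by (intro exI[of _ 1]) (simp add: rv_def)
qed

lemma run_1:
  assumes "M mod 3 = 2" "a \<or> b"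
  shows "\<exists>j\<le>M. (j = 0 \<longrightarrow> a) \<and> (j = M \<longrightarrow> b) \<and> rv M a b = rvm M j a b + 1"
proof -
  obtain k where M: "M = 3 * k + 2" using decomp3[of M] assms by auto
  show ?thesis
  proof (cases a)
    case True
    have "rvm M 0 a b = rv (3 * k + 1) True b" using M by (simp add: rvm_def)
    then show ?thesis using M True rv_3k[of k 1 True b] rv_3k[of k 2 a b]
      by (intro exI[of _ 0]) (simp add: rv_def)
  next
    case False
    then have b using assms by simp
    have "rvm M M a b = rv (3 * k + 1) a True" using M by (simp add: rvm_def)
    then show ?thesis using M False \<open>b\<close> rv_3k[of k 1 a True] rv_3k[of k 2 a b]
      by (intro exI[of _ M]) (simp add: rv_def)
  qed
qed

definition legal :: "bool \<Rightarrow> bool \<Rightarrow> bool list \<Rightarrow> nat \<Rightarrow> bool" where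
  "legal a b w k \<longleftrightarrow> k \<le> length w \<and> (k = 0 \<longrightarrow> a) \<and> (k = length w \<longrightarrow> b) \<and> wmv k w \<noteq> w"

lemma all_true_rep: "\<forall>x\<in>set A. x \<Longrightarrow> A = replicate (length A) True"
  using replicate_length_same[of A True] by auto

lemma gap_decomp:
  assumes "k \<le> length w"
  shows "\<exists>xs M j ys. w = xs @ replicate M True @ ys \<and> k = length xs + j \<and> j \<le> M \<and>
    (xs = [] \<or> last xs = False) \<and> (ys = [] \<or> hd ys = False)"
proof -
  define u where "u = take k w"
  define v where "v = drop k w"
  define A where "A = takeWhile id (rev u)"
  define xs where "xs = rev (dropWhile id (rev u))"
  define B where "B = takeWhile id v"
  define ys where "ys = dropWhile id v"
  have "rev u = A @ dropWhile id (rev u)" unfolding A_def by simp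
  then have u: "u = xs @ rev A" unfolding xs_def by (metis rev_append rev_rev_ident)
  have "\<forall>x\<in>set A. x" unfolding A_def by (auto dest: set_takeWhileD)
  then obtain nA where rA: "rev A = replicate nA True"
    using all_true_rep[of A] by (metis rev_replicate)
  have v: "v = B @ ys" unfolding B_def ys_def by simp
  have "\<forall>x\<in>set B. x" unfolding B_def by (auto dest: set_takeWhileD)
  then obtain nB where rB: "B = replicate nB True"
    using all_true_rep[of B] by metis
  have "w = u @ v" unfolding u_def v_def by simp
  also have "\<dots> = xs @ replicate nA True @ replicate nB True @ ys" using u v rA rB by simp
  also have "\<dots> = xs @ replicate (nA + nB) True @ ys" by (simp add: replicate_add)
  finally have w: "w = xs @ replicate (nA + nB) True @ ys" .
  have "length u = k" using assms unfolding u_def by simp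
  then have k: "k = length xs + nA" using u rA by (metis length_append length_rev length_replicate)
  have xs: "xs = [] \<or> last xs = False"
    unfolding xs_def using hd_dropWhile[of id "rev u"] by (auto simp: last_rev)
  have ys: "ys = [] \<or> hd ys = False"
    unfolding ys_def using hd_dropWhile[of id v] by auto
  show ?thesis using w k xs ys by (intro exI[of _ xs] exI[of _ "nA + nB"] exI[of _ nA] exI[of _ ys]) simp
qed

lemma word_move:
  assumes w: "w = xs @ replicate M True @ ys" and xs: "xs = [] \<or> last xs = False"
    and ys: "ys = [] \<or> hd ys = False" and M: "1 \<le> M" and j: "j \<le> M"
    and ja: "j = 0 \<longrightarrow> (xs \<noteq> [] \<or> a)" and jb: "j = M \<longrightarrow> (ys \<noteq> [] \<or> b)"
  shows "legal a b w (length xs + j) \<and>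
     ps a 0 w b + rvm M j (xs \<noteq> [] \<or> a) (ys \<noteq> [] \<or> b) = ps a 0 (wmv (length xs + j) w) b + rv M (xs \<noteq> [] \<or> a) (ys \<noteq> [] \<or> b)"
proof -
  have e1: "ps a 0 w b = (if xs = [] then 0 else ps a 0 (butlast xs) True) + rv M (xs \<noteq> [] \<or> a) (ys \<noteq> [] \<or> b) + (if ys = [] then 0 else ps True 0 (tl ys) b)"
    using core_ps(1)[OF xs ys j] w by simp
  have e2: "ps a 0 (wmv (length xs + j) w) b = (if xs = [] then 0 else ps a 0 (butlast xs) True) + rvm M j (xs \<noteq> [] \<or> a) (ys \<noteq> [] \<or> b) + (if ys = [] then 0 else ps True 0 (tl ys) b)"
    using core_ps(2)[OF xs ys j] core_wmv[OF xs ys j] w by simp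
  have d: "rvm M j (xs \<noteq> [] \<or> a) (ys \<noteq> [] \<or> b) + 1 \<le> rv M (xs \<noteq> [] \<or> a) (ys \<noteq> [] \<or> b)"
    using run_drop[OF M j ja jb] by simp
  have "wmv (length xs + j) w \<noteq> w" using e1 e2 d by auto
  moreover have "length xs + j \<le> length w" using w j by simp
  moreover have "length xs + j = 0 \<longrightarrow> a" using ja by simp
  moreover have "length xs + j = length w \<longrightarrow> b" using jb w j by auto
  ultimately show ?thesis unfolding legal_def using e1 e2 by simp
qed

lemma W1:
  assumes "legal a b w k"
  shows "ps a 0 (wmv k w) b + 1 \<le> ps a 0 w b \<and> ps a 0 w b \<le> ps a 0 (wmv k w) b + 3"
proof -
  from assms have kl: "k \<le> length w" unfolding legal_def by simp
  obtain xs M j ys where w: "w = xs @ replicate M True @ ys" and k: "k = length xs + j" and j: "j \<le> M"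
    and xs: "xs = [] \<or> last xs = False" and ys: "ys = [] \<or> hd ys = False"
    using gap_decomp[OF kl] by blast
  have M: "1 \<le> M"
  proof (rule ccontr)
    assume "\<not> 1 \<le> M"
    then have "M = 0" by simp
    then have "wmv k w = w" using core_wmv[OF xs ys j] w k by (simp add: wm_def)
    then show False using assms unfolding legal_def by simp
  qed
  have ja: "j = 0 \<longrightarrow> (xs \<noteq> [] \<or> a)" using assms k unfolding legal_def by auto
  have jb: "j = M \<longrightarrow> (ys \<noteq> [] \<or> b)" using assms k w unfolding legal_def by auto
  show ?thesis using word_move[OF w xs ys M j ja jb] run_drop[OF M j ja jb] unfolding k by linarith
qed

lemma run_of_true:
  assumes "i < length w" "w ! i"
  shows "\<exists>xs M ys. w = xs @ replicate M True @ ys \<and> (xs = [] \<or> last xs = False) \<and>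
     (ys = [] \<or> hd ys = False) \<and> 1 \<le> M"
proof -
  obtain xs M j ys where w: "w = xs @ replicate M True @ ys" and k: "i = length xs + j" and j: "j \<le> M"
    and xs: "xs = [] \<or> last xs = False" and ys: "ys = [] \<or> hd ys = False"
    using gap_decomp[of i w] assms by auto
  have "j \<noteq> M"
  proof
    assume "j = M"
    then have "w ! i = ys ! 0" using w k by (simp add: nth_append)
    moreover have "ys \<noteq> []" using assms w k \<open>j = M\<close> by auto
    ultimately show False using ys assms by (simp add: hd_conv_nth)
  qed
  then show ?thesis using w xs ys j by (intro exI[of _ xs] exI[of _ M] exI[of _ ys]) auto
qed

lemma odd_run:
  "odd (ps a L w b) \<Longrightarrow> \<exists>xs M ys. replicate L True @ w = xs @ replicate M True @ ys \<and>
     (xs = [] \<or> last xs = False) \<and> (ys = [] \<or> hd ys = False) \<and> M mod 3 = 2 \<and>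
     (xs \<noteq> [] \<or> a \<or> ys \<noteq> [] \<or> b)"
proof (induction w arbitrary: a L)
  case Nil
  then have "L mod 3 = 2 \<and> (a \<or> b)" by (auto simp: rv_def split: if_splits)
  then show ?case by (intro exI[of _ "[]"] exI[of _ L]) auto
next
  case (Cons x w)
  show ?case
  proof (cases x)
    case True
    then have "odd (ps a (Suc L) w b)" using Cons.prems by simp
    from Cons.IH[OF this] True show ?thesis by (simp add: replicate_app_Cons_same)
  next
    case False
    show ?thesis
    proof (cases "odd (rv L a True)")
      case True
      then have "L mod 3 = 2" by (auto simp: rv_def split: if_splits)
      then show ?thesis using False
        by (intro exI[of _ "[]"] exI[of _ L] exI[of _ "False # w"]) auto
    next
      case ev: False
      then have "odd (ps True 0 w b)" using Cons.prems False by simp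
      from Cons.IH[OF this] obtain xs M ys where
        h: "w = xs @ replicate M True @ ys" "xs = [] \<or> last xs = False" "ys = [] \<or> hd ys = False" "M mod 3 = 2"
        by auto
      show ?thesis using h False
        by (intro exI[of _ "replicate L True @ False # xs"] exI[of _ M] exI[of _ ys]) auto
    qed
  qed
qed

lemma W_hi:
  assumes "i < length w" "w ! i" "2 \<le> length w \<or> a \<or> b"
  shows "\<exists>k. legal a b w k \<and> ps a 0 (wmv k w) b + 2 \<le> ps a 0 w b"
proof -
  obtain xs M ys where w: "w = xs @ replicate M True @ ys" and xs: "xs = [] \<or> last xs = False"
    and ys: "ys = [] \<or> hd ys = False" and M: "1 \<le> M" using run_of_true[OF assms(1,2)] by blast
  have "2 \<le> M \<or> (xs \<noteq> [] \<or> a) \<or> (ys \<noteq> [] \<or> b)" using assms(3) w M by auto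
  from run_hi[OF M this] obtain j where j: "j \<le> M" "j = 0 \<longrightarrow> (xs \<noteq> [] \<or> a)" "j = M \<longrightarrow> (ys \<noteq> [] \<or> b)"
    "rvm M j (xs \<noteq> [] \<or> a) (ys \<noteq> [] \<or> b) + 2 \<le> rv M (xs \<noteq> [] \<or> a) (ys \<noteq> [] \<or> b)"
    by blast
  show ?thesis using word_move[OF w xs ys M j(1-3)] j(4) by (intro exI[of _ "length xs + j"]) linarith
qed

lemma W_lo:
  assumes "i < length w" "w ! i" "2 \<le> length w \<or> a \<or> b"
  shows "\<exists>k. legal a b w k \<and> ps a 0 w b \<le> ps a 0 (wmv k w) b + 2"
proof -
  obtain xs M ys where w: "w = xs @ replicate M True @ ys" and xs: "xs = [] \<or> last xs = False"
    and ys: "ys = [] \<or> hd ys = False" and M: "1 \<le> M" using run_of_true[OF assms(1,2)] by blast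
  have "2 \<le> M \<or> (xs \<noteq> [] \<or> a) \<or> (ys \<noteq> [] \<or> b)" using assms(3) w M by auto
  from run_lo[OF M this] obtain j where j: "j \<le> M" "j = 0 \<longrightarrow> (xs \<noteq> [] \<or> a)" "j = M \<longrightarrow> (ys \<noteq> [] \<or> b)"
    "rv M (xs \<noteq> [] \<or> a) (ys \<noteq> [] \<or> b) \<le> rvm M j (xs \<noteq> [] \<or> a) (ys \<noteq> [] \<or> b) + 2"
    by blast
  show ?thesis using word_move[OF w xs ys M j(1-3)] j(4) by (intro exI[of _ "length xs + j"]) linarith
qed

lemma W_odd:
  assumes "odd (ps a 0 w b)"
  shows "(\<exists>k. legal a b w k \<and> ps a 0 w b = ps a 0 (wmv k w) b + 3) \<and>
         (\<exists>k. legal a b w k \<and> ps a 0 w b = ps a 0 (wmv k w) b + 1)"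
proof -
  obtain xs M ys where w: "w = xs @ replicate M True @ ys" and xs: "xs = [] \<or> last xs = False"
    and ys: "ys = [] \<or> hd ys = False" and Mm: "M mod 3 = 2" and f: "xs \<noteq> [] \<or> a \<or> ys \<noteq> [] \<or> b"
    using odd_run[OF assms] by auto
  have M: "1 \<le> M" using Mm by (cases M) auto
  have f': "(xs \<noteq> [] \<or> a) \<or> (ys \<noteq> [] \<or> b)" using f by blast
  obtain j where j: "j \<le> M" "j = 0 \<longrightarrow> (xs \<noteq> [] \<or> a)" "j = M \<longrightarrow> (ys \<noteq> [] \<or> b)"
    "rv M (xs \<noteq> [] \<or> a) (ys \<noteq> [] \<or> b) = rvm M j (xs \<noteq> [] \<or> a) (ys \<noteq> [] \<or> b) + 3"
    using run_3[OF Mm f'] by blast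
  obtain j' where j': "j' \<le> M" "j' = 0 \<longrightarrow> (xs \<noteq> [] \<or> a)" "j' = M \<longrightarrow> (ys \<noteq> [] \<or> b)"
    "rv M (xs \<noteq> [] \<or> a) (ys \<noteq> [] \<or> b) = rvm M j' (xs \<noteq> [] \<or> a) (ys \<noteq> [] \<or> b) + 1"
    using run_1[OF Mm f'] by blast
  show ?thesis
    using word_move[OF w xs ys M j(1-3)] j(4) word_move[OF w xs ys M j'(1-3)] j'(4)
    by (intro conjI exI[of _ "length xs + j"] exI[of _ "length xs + j'"]) linarith+
qed

definition cnt :: "nat \<Rightarrow> nat \<Rightarrow> nat" where "cnt n p = (n + 1 - p) div 2"
definition wd :: "nat \<Rightarrow> nat \<Rightarrow> nat set \<Rightarrow> bool list" where
  "wd n p D = map (\<lambda>j. 2 * j + p \<notin> D) [0..<cnt n p]"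
definition la :: "nat \<Rightarrow> bool" where "la p = (1 \<le> p)"
definition ra :: "nat \<Rightarrow> nat \<Rightarrow> bool" where "ra n p = (2 * cnt n p + p \<le> n)"
definition PSp :: "nat \<Rightarrow> nat \<Rightarrow> nat set \<Rightarrow> nat" where
  "PSp n p D = ps (la p) 0 (wd n p D) (ra n p)"
definition PS :: "nat \<Rightarrow> nat set \<Rightarrow> nat" where "PS n D = PSp n 0 D + PSp n 1 D"

lemma PS_split: "q \<le> 1 \<Longrightarrow> PS n D = PSp n q D + PSp n (1 - q) D"
  unfolding PS_def by (cases q) auto

lemma wd_len[simp]: "length (wd n p D) = cnt n p" unfolding wd_def by simp
lemma wd_nth: "i < cnt n p \<Longrightarrow> wd n p D ! i = (2 * i + p \<notin> D)" unfolding wd_def by simp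

lemma pn_mem: "x \<in> path_nbr n v \<longleftrightarrow> x < n \<and> v < n \<and> (x + 1 = v \<or> v + 1 = x)"
  unfolding path_nbr_def by simp

lemma cnt2: "2 * cnt n p \<le> n + 1 - p"
  unfolding cnt_def using div_mult_mod_eq[of "n + 1 - p" 2] by linarith

lemma cnt_lt: "i < cnt n p \<Longrightarrow> p \<le> 1 \<Longrightarrow> 2 * i + p < n"
  using cnt2[of n p] by linarith

lemma lt_cnt: "2 * i + p < n \<Longrightarrow> p \<le> 1 \<Longrightarrow> i < cnt n p"
proof -
  assume "2 * i + p < n" "p \<le> 1"
  then have "2 * i + 2 \<le> n + 1 - p" by linarith
  then have "(2 * i + 2) div 2 \<le> (n + 1 - p) div 2" by (rule div_le_mono)
  then show ?thesis unfolding cnt_def by simp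
qed

lemma key_par:
  assumes "v + 1 = 2 * s + (r::nat)" "r \<le> 1" "p \<le> 1"
  shows "(2 * i + p + 1 = v \<or> v + 1 = 2 * i + p) \<longleftrightarrow> (r = p \<and> (i + 1 = s \<or> i = s))"
proof -
  have ne: "2 * a \<noteq> 2 * b + 1" for a b :: nat using double_not_eq_Suc_double[of a b] by simp
  consider "r = 0" "p = 0" | "r = 0" "p = 1" | "r = 1" "p = 0" | "r = 1" "p = 1" using assms(2,3) by linarith
  then show ?thesis
  proof cases
    case 1 then show ?thesis using assms(1) by auto
  next
    case 2
    have "2 * (i + 2) \<noteq> 2 * s + 1" "2 * s \<noteq> 2 * i + 1" using ne by blast+
    then show ?thesis using 2 assms(1) by auto
  next
    case 3
    have "2 * (i + 1) \<noteq> 2 * s + 1" "2 * i \<noteq> 2 * s + 1" using ne by blast+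
    then show ?thesis using 3 assms(1) by auto
  next
    case 4 then show ?thesis using assms(1) by auto
  qed
qed

lemma wd_move:
  assumes "v < n" "p \<le> 1"
  shows "wd n p (D \<union> path_nbr n v) =
     (if (v + 1) mod 2 = p then wmv ((v + 1) div 2) (wd n p D) else wd n p D)"
proof (rule nth_equalityI)
  show "length (wd n p (D \<union> path_nbr n v)) =
    length (if (v + 1) mod 2 = p then wmv ((v + 1) div 2) (wd n p D) else wd n p D)" by simp
  fix i assume "i < length (wd n p (D \<union> path_nbr n v))"
  then have i: "i < cnt n p" by simp
  have lt: "2 * i + p < n" using cnt_lt[OF i assms(2)] .
  have "wd n p (D \<union> path_nbr n v) ! i = (2 * i + p \<notin> D \<and> \<not> (2 * i + p + 1 = v \<or> v + 1 = 2 * i + p))"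
    using wd_nth[OF i] lt assms by (simp add: pn_mem)
  moreover have "(2 * i + p + 1 = v \<or> v + 1 = 2 * i + p) \<longleftrightarrow>
      ((v + 1) mod 2 = p \<and> (i + 1 = (v + 1) div 2 \<or> i = (v + 1) div 2))"
    using key_par[of v "(v + 1) div 2" "(v + 1) mod 2" p i] assms(2) by simp
  ultimately show "wd n p (D \<union> path_nbr n v) ! i =
    (if (v + 1) mod 2 = p then wmv ((v + 1) div 2) (wd n p D) else wd n p D) ! i"
    using i by (auto simp: wmv_nth wd_nth)
qed

lemma move_legal:
  assumes "v < n" "path_nbr n v - D \<noteq> {}"
  shows "legal (la ((v + 1) mod 2)) (ra n ((v + 1) mod 2)) (wd n ((v + 1) mod 2) D) ((v + 1) div 2)"
proof -
  define q where "q = (v + 1) mod 2"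
  define k where "k = (v + 1) div 2"
  have q1: "q \<le> 1" unfolding q_def by simp
  obtain x where x: "x \<in> path_nbr n v" "x \<notin> D" using assms by blast
  then have xn: "x < n" and xv: "x + 1 = v \<or> v + 1 = x" by (auto simp: pn_mem)
  define i where "i = x div 2"
  have "x mod 2 = (v + 1) mod 2"
  proof (cases "x + 1 = v")
    case True then have "v + 1 = x + 2" by simp
    then show ?thesis by simp
  next
    case False then show ?thesis using xv by simp
  qed
  then have xi: "x = 2 * i + q" unfolding i_def q_def by (metis div_mult_mod_eq mult.commute)
  have i: "i < cnt n q" using lt_cnt[of i q n] xi xn q1 by simp
  have "wd n q (D \<union> path_nbr n v) ! i = False" using wd_nth[OF i] xi x by simp
  moreover have "wd n q D ! i = True" using wd_nth[OF i] xi x by simp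
  ultimately have "wmv k (wd n q D) \<noteq> wd n q D"
    using wd_move[OF assms(1) q1, of D] unfolding q_def k_def by auto
  moreover have kq: "2 * k + q = v + 1" unfolding k_def q_def by simp
  moreover have "k \<le> cnt n q"
  proof -
    have "2 * k \<le> n + 1 - q" using kq assms(1) by linarith
    then have "(2 * k) div 2 \<le> (n + 1 - q) div 2" by (rule div_le_mono)
    then show ?thesis unfolding cnt_def by simp
  qed
  moreover have "k = 0 \<longrightarrow> la q" using kq unfolding la_def by auto
  moreover have "k = cnt n q \<longrightarrow> ra n q" using kq assms(1) unfolding ra_def by auto
  ultimately show ?thesis unfolding legal_def q_def[symmetric] k_def[symmetric] by simp
qed

lemma legal_move:
  assumes "p \<le> 1" "legal (la p) (ra n p) (wd n p D) k"
  shows "2 * k + p - 1 < n \<and> (2 * k + p - 1 + 1) mod 2 = p \<and> (2 * k + p - 1 + 1) div 2 = k \<and>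
    path_nbr n (2 * k + p - 1) - D \<noteq> {}"
proof -
  have k: "k \<le> cnt n p" "k = 0 \<longrightarrow> 1 \<le> p" "k = cnt n p \<longrightarrow> 2 * cnt n p + p \<le> n"
    and ne: "wmv k (wd n p D) \<noteq> wd n p D"
    using assms(2) unfolding legal_def la_def ra_def by auto
  have c2: "2 * cnt n p + p \<le> n + 1" using cnt2[of n p] assms(1) by linarith
  have pos: "1 \<le> 2 * k + p" using k(2) by (cases k) auto
  have vn: "2 * k + p - 1 < n"
  proof (cases "k = cnt n p")
    case True then show ?thesis using k(3) pos by linarith
  next
    case False then show ?thesis using k(1) c2 pos by linarith
  qed
  have e0: "2 * k + p - 1 + 1 = 2 * k + p" using pos by simp
  have e1: "(2 * k + p - 1 + 1) mod 2 = p" and e2: "(2 * k + p - 1 + 1) div 2 = k"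
    unfolding e0 using assms(1) by auto
  have "path_nbr n (2 * k + p - 1) - D \<noteq> {}"
  proof
    assume "path_nbr n (2 * k + p - 1) - D = {}"
    then have "D \<union> path_nbr n (2 * k + p - 1) = D" by blast
    then show False using wd_move[OF vn assms(1), of D] e1 e2 ne by simp
  qed
  then show ?thesis using vn e1 e2 by simp
qed

lemma ps_false_rep: "ps a 0 (replicate m False) b = 0"
  by (induction m arbitrary: a) auto

lemma wd_full:
  assumes "2 \<le> n" "p \<le> 1" "{v \<in> {0..<n}. path_nbr n v - D \<noteq> {}} = {}"
  shows "wd n p D = replicate (cnt n p) False"
proof (rule nth_equalityI)
  show "length (wd n p D) = length (replicate (cnt n p) False)" by simp
  fix i assume "i < length (wd n p D)"
  then have i: "i < cnt n p" by simp
  define x where "x = 2 * i + p"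
  have xn: "x < n" using cnt_lt[OF i assms(2)] unfolding x_def .
  define v where "v = (if x + 1 < n then x + 1 else x - 1)"
  have vn: "v < n" and xv: "x \<in> path_nbr n v" using xn assms(1) unfolding v_def by (auto simp: pn_mem)
  then have "x \<in> D" using assms(3) by auto
  then show "wd n p D ! i = replicate (cnt n p) False ! i" using wd_nth[OF i] i unfolding x_def by simp
qed

lemma PS_term:
  assumes "2 \<le> n" "{v \<in> {0..<n}. path_nbr n v - D \<noteq> {}} = {}"
  shows "PS n D = 0"
  unfolding PS_def PSp_def using wd_full[OF assms(1) _ assms(2)] by (simp add: ps_false_rep)

lemma PS_move:
  assumes "v < n"
  shows "PS n (D \<union> path_nbr n v) + PSp n ((v + 1) mod 2) D =
    PS n D + ps (la ((v + 1) mod 2)) 0 (wmv ((v + 1) div 2) (wd n ((v + 1) mod 2) D)) (ra n ((v + 1) mod 2))"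
proof -
  define q where "q = (v + 1) mod 2"
  have q1: "q \<le> 1" unfolding q_def by simp
  have a: "PSp n q (D \<union> path_nbr n v) = ps (la q) 0 (wmv ((v + 1) div 2) (wd n q D)) (ra n q)"
    unfolding PSp_def using wd_move[OF assms q1, of D] unfolding q_def by simp
  have b: "PSp n (1 - q) (D \<union> path_nbr n v) = PSp n (1 - q) D"
  proof -
    have "q \<noteq> 1 - q" using q1 by (cases q) auto
    then have "(v + 1) mod 2 \<noteq> 1 - q" unfolding q_def by simp
    then show ?thesis unfolding PSp_def using wd_move[OF assms, of "1 - q" D] q1 by simp
  qed
  show ?thesis using PS_split[OF q1, of n D] PS_split[OF q1, of n "D \<union> path_nbr n v"] a b
    unfolding q_def[symmetric] by linarith
qed

lemma PS_step:
  assumes "v < n" "path_nbr n v - D \<noteq> {}"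
  shows "PS n (D \<union> path_nbr n v) + 1 \<le> PS n D \<and> PS n D \<le> PS n (D \<union> path_nbr n v) + 3"
  using W1[OF move_legal[OF assms]] PS_move[OF assms(1), of D] unfolding PSp_def by linarith

lemma PS_exist:
  assumes "p \<le> 1" "legal (la p) (ra n p) (wd n p D) k"
  shows "\<exists>v\<in>{0..<n}. path_nbr n v - D \<noteq> {} \<and>
     PS n (D \<union> path_nbr n v) + PSp n p D = PS n D + ps (la p) 0 (wmv k (wd n p D)) (ra n p)"
proof -
  note L = legal_move[OF assms]
  show ?thesis using L PS_move[of "2 * k + p - 1" n D]
    by (intro bexI[of _ "2 * k + p - 1"]) auto
qed

lemma some_true:
  assumes "{v \<in> {0..<n}. path_nbr n v - D \<noteq> {}} \<noteq> {}"
  shows "\<exists>p i. p \<le> 1 \<and> i < cnt n p \<and> wd n p D ! i"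
proof -
  obtain v x where "v < n" "x \<in> path_nbr n v" "x \<notin> D" using assms by auto
  then have xn: "x < n" "x \<notin> D" by (auto simp: pn_mem)
  have "x div 2 < cnt n (x mod 2)" using lt_cnt[of "x div 2" "x mod 2" n] xn(1) by simp
  moreover have "2 * (x div 2) + x mod 2 = x" by simp
  ultimately show ?thesis using wd_nth[of "x div 2" n "x mod 2" D] xn
    by (intro exI[of _ "x mod 2"] exI[of _ "x div 2"]) auto
qed

lemma len_cond: "3 \<le> n \<Longrightarrow> p \<le> 1 \<Longrightarrow> 2 \<le> length (wd n p D) \<or> la p \<or> ra n p"
proof (cases "p = 0")
  case True
  assume "3 \<le> n"
  then have "4 div 2 \<le> (n + 1 - p) div 2" using True by (intro div_le_mono) simp
  then have "2 \<le> cnt n p" unfolding cnt_def by simp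
  then show ?thesis by simp
qed (simp add: la_def)

lemma PS_hi:
  assumes "3 \<le> n" "{v \<in> {0..<n}. path_nbr n v - D \<noteq> {}} \<noteq> {}"
  shows "\<exists>v\<in>{0..<n}. path_nbr n v - D \<noteq> {} \<and> PS n (D \<union> path_nbr n v) + 2 \<le> PS n D"
proof -
  obtain p i where p: "p \<le> 1" "i < cnt n p" "wd n p D ! i" using some_true[OF assms(2)] by blast
  have il: "i < length (wd n p D)" using p(2) by simp
  from W_hi[OF il p(3) len_cond[OF assms(1) p(1)]] obtain k where k: "legal (la p) (ra n p) (wd n p D) k"
    "ps (la p) 0 (wmv k (wd n p D)) (ra n p) + 2 \<le> ps (la p) 0 (wd n p D) (ra n p)"
    by blast
  from PS_exist[OF p(1) k(1)] obtain v where v: "v\<in>{0..<n}" "path_nbr n v - D \<noteq> {}"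
    "PS n (D \<union> path_nbr n v) + PSp n p D = PS n D + ps (la p) 0 (wmv k (wd n p D)) (ra n p)"
    by blast
  have "PS n (D \<union> path_nbr n v) + 2 \<le> PS n D" using v(3) k(2) unfolding PSp_def by linarith
  then show ?thesis using v(1,2) by blast
qed

lemma PS_lo:
  assumes "3 \<le> n" "{v \<in> {0..<n}. path_nbr n v - D \<noteq> {}} \<noteq> {}"
  shows "\<exists>v\<in>{0..<n}. path_nbr n v - D \<noteq> {} \<and> PS n D \<le> PS n (D \<union> path_nbr n v) + 2"
proof -
  obtain p i where p: "p \<le> 1" "i < cnt n p" "wd n p D ! i" using some_true[OF assms(2)] by blast
  have il: "i < length (wd n p D)" using p(2) by simp
  from W_lo[OF il p(3) len_cond[OF assms(1) p(1)]] obtain k where k: "legal (la p) (ra n p) (wd n p D) k"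
    "ps (la p) 0 (wd n p D) (ra n p) \<le> ps (la p) 0 (wmv k (wd n p D)) (ra n p) + 2"
    by blast
  from PS_exist[OF p(1) k(1)] obtain v where v: "v\<in>{0..<n}" "path_nbr n v - D \<noteq> {}"
    "PS n (D \<union> path_nbr n v) + PSp n p D = PS n D + ps (la p) 0 (wmv k (wd n p D)) (ra n p)"
    by blast
  have "PS n D \<le> PS n (D \<union> path_nbr n v) + 2" using v(3) k(2) unfolding PSp_def by linarith
  then show ?thesis using v(1,2) by blast
qed

lemma PS_odd:
  assumes "odd (PS n D)"
  shows "(\<exists>v\<in>{0..<n}. path_nbr n v - D \<noteq> {} \<and> PS n D = PS n (D \<union> path_nbr n v) + 3) \<and>
         (\<exists>v\<in>{0..<n}. path_nbr n v - D \<noteq> {} \<and> PS n D = PS n (D \<union> path_nbr n v) + 1)"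
proof -
  obtain p where p: "p \<le> 1" "odd (PSp n p D)"
    using assms unfolding PS_def by (metis odd_add le_numeral_extra(4) zero_le)
  then have "odd (ps (la p) 0 (wd n p D) (ra n p))" unfolding PSp_def by simp
  from W_odd[OF this] obtain k k' where
    k: "legal (la p) (ra n p) (wd n p D) k" "ps (la p) 0 (wd n p D) (ra n p) = ps (la p) 0 (wmv k (wd n p D)) (ra n p) + 3"
    and k': "legal (la p) (ra n p) (wd n p D) k'" "ps (la p) 0 (wd n p D) (ra n p) = ps (la p) 0 (wmv k' (wd n p D)) (ra n p) + 1"
    by blast
  obtain v where v: "v\<in>{0..<n}" "path_nbr n v - D \<noteq> {}"
    "PS n (D \<union> path_nbr n v) + PSp n p D = PS n D + ps (la p) 0 (wmv k (wd n p D)) (ra n p)"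
    using PS_exist[OF p(1) k(1)] by blast
  obtain v' where v': "v'\<in>{0..<n}" "path_nbr n v' - D \<noteq> {}"
    "PS n (D \<union> path_nbr n v') + PSp n p D = PS n D + ps (la p) 0 (wmv k' (wd n p D)) (ra n p)"
    using PS_exist[OF p(1) k'(1)] by blast
  have "PS n D = PS n (D \<union> path_nbr n v) + 3" using v(3) k(2) unfolding PSp_def by linarith
  moreover have "PS n D = PS n (D \<union> path_nbr n v') + 1" using v'(3) k'(2) unfolding PSp_def by linarith
  ultimately show ?thesis using v v' by blast
qed

lemma tg_PS:
  assumes "3 \<le> n" "D \<subseteq> {0..<n}"
  shows "tg_val {0..<n} (path_nbr n) D True n = PS n D div 2"
proof -
  have c: "card ({0..<n} - D) \<le> n" using card_mono[of "{0..<n}" "{0..<n} - D"] by auto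
  have "tg_val {0..<n} (path_nbr n) D True n = (if True then PS n D div 2 else (PS n D + 1) div 2)"
  proof (rule tg_val_formula[OF _ _ _ _ _ _ _ _ assms(2) c])
    show "finite {0..<n}" by simp
    show "path_nbr n v \<subseteq> {0..<n}" for v by (auto simp: pn_mem)
    show "PS n D' = 0" if "D' \<subseteq> {0..<n}" "{v \<in> {0..<n}. path_nbr n v - D' \<noteq> {}} = {}" for D'
      using PS_term[OF _ that(2)] assms(1) by simp
    show "PS n (D' \<union> path_nbr n v) + 1 \<le> PS n D' \<and> PS n D' \<le> PS n (D' \<union> path_nbr n v) + 3"
      if "D' \<subseteq> {0..<n}" "v \<in> {0..<n}" "path_nbr n v - D' \<noteq> {}" for D' v
      using PS_step[of v n D'] that by simp
    show "\<exists>v\<in>{0..<n}. path_nbr n v - D' \<noteq> {} \<and> PS n (D' \<union> path_nbr n v) + 2 \<le> PS n D'"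
      if "D' \<subseteq> {0..<n}" "{v \<in> {0..<n}. path_nbr n v - D' \<noteq> {}} \<noteq> {}" for D'
      using PS_hi[OF assms(1) that(2)] .
    show "\<exists>v\<in>{0..<n}. path_nbr n v - D' \<noteq> {} \<and> PS n D' \<le> PS n (D' \<union> path_nbr n v) + 2"
      if "D' \<subseteq> {0..<n}" "{v \<in> {0..<n}. path_nbr n v - D' \<noteq> {}} \<noteq> {}" for D'
      using PS_lo[OF assms(1) that(2)] .
    show "\<exists>v\<in>{0..<n}. path_nbr n v - D' \<noteq> {} \<and> PS n D' = PS n (D' \<union> path_nbr n v) + 3"
      if "D' \<subseteq> {0..<n}" "odd (PS n D')" for D'
      using PS_odd[OF that(2)] by blast
    show "\<exists>v\<in>{0..<n}. path_nbr n v - D' \<noteq> {} \<and> PS n D' = PS n (D' \<union> path_nbr n v) + 1"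
      if "D' \<subseteq> {0..<n}" "odd (PS n D')" for D'
      using PS_odd[OF that(2)] by blast
  qed
  then show ?thesis by simp
qed

lemma PSp_empty: "PSp n p {} = rv (cnt n p) (la p) (ra n p)"
  unfolding PSp_def wd_def by (simp add: map_replicate_const ps_rep_nil)

lemma wd_other: "v mod 2 \<noteq> p \<Longrightarrow> p \<le> 1 \<Longrightarrow> wd n p {v} = replicate (cnt n p) True"
proof (rule nth_equalityI)
  assume a: "v mod 2 \<noteq> p" "p \<le> 1"
  fix i assume "i < length (wd n p {v})"
  then have i: "i < cnt n p" by simp
  have "2 * i + p \<noteq> v" using a by auto
  then show "wd n p {v} ! i = replicate (cnt n p) True ! i" using wd_nth[OF i] i by simp
qed simp

lemma PSp_other: "v mod 2 \<noteq> p \<Longrightarrow> p \<le> 1 \<Longrightarrow> PSp n p {v} = rv (cnt n p) (la p) (ra n p)"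
  unfolding PSp_def using wd_other by (simp add: ps_rep_nil)

lemma wd_same: "i < cnt n p \<Longrightarrow>
   wd n p {2 * i + p} = replicate i True @ False # replicate (cnt n p - i - 1) True"
proof (rule nth_equalityI)
  assume i: "i < cnt n p"
  show "length (wd n p {2 * i + p}) = length (replicate i True @ False # replicate (cnt n p - i - 1) True)"
    using i by simp
  fix j assume "j < length (wd n p {2 * i + p})"
  then have j: "j < cnt n p" by simp
  show "wd n p {2 * i + p} ! j = (replicate i True @ False # replicate (cnt n p - i - 1) True) ! j"
    using wd_nth[OF j] j i by (auto simp: nth_append nth_Cons' )
qed

lemma PSp_same: "i < cnt n p \<Longrightarrow>
   PSp n p {2 * i + p} = rv i (la p) True + rv (cnt n p - i - 1) True (ra n p)"
  unfolding PSp_def using wd_same by (simp add: ps_rep ps_rep_nil)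

lemma rv_3k0: "rv (3 * k) a b = 4 * k" using rv_3k[of k 0 a b] by simp

lemma cnt_even: "n + 1 - p = 2 * c \<Longrightarrow> cnt n p = c" unfolding cnt_def by simp
lemma cnt_odd: "n + 1 - p = 2 * c + 1 \<Longrightarrow> cnt n p = c" unfolding cnt_def by simp

lemma la0: "la 0 = False" and la1: "la 1 = True" by (simp_all add: la_def)

lemma main_ineq:
  assumes "3 \<le> n" "n mod 6 \<notin> {2, 4}"
  shows "\<exists>v<n. PS n {} div 2 \<le> PS n {v} div 2"
proof -
  obtain m where nm: "n = 6 * m + n mod 6" by (metis div_mult_mod_eq mult.commute)
  have "n mod 6 < 6" by simp
  then consider "n mod 6 = 0" | "n mod 6 = 1" | "n mod 6 = 3" | "n mod 6 = 5" using assms(2) by fastforce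
  then show ?thesis
  proof cases
    case 1
    then have n: "n = 6 * m" using nm by simp
    then have m: "m \<ge> 1" using assms(1) by simp
    have c0: "cnt n 0 = 3 * m" by (rule cnt_odd) (simp add: n)
    have c1: "cnt n 1 = 3 * m" by (rule cnt_even) (simp add: n)
    have r0: "ra n 0" and r1: "\<not> ra n 1" using c0 c1 n unfolding ra_def by simp_all
    have e: "3 * m - 1 - 1 = 3 * (m - 1) + 1" using m by simp
    have "PS n {} = rv (3 * m) False True + rv (3 * m) True False"
      unfolding PS_def PSp_empty c0 c1 using r0 r1 la0 la1 by simp
    also have "\<dots> = 8 * m" by (simp only: rv_3k rv_3k0; simp add: rv_def)
    finally have a: "PS n {} = 8 * m" .
    have s1: "PSp n 0 {2} = rv 1 (la 0) True + rv (cnt n 0 - 1 - 1) True (ra n 0)"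
      using PSp_same[of 1 n 0] c0 m by simp
    have o1: "PSp n 1 {2} = rv (cnt n 1) (la 1) (ra n 1)" using PSp_other[of 2 1 n] by simp
    have "PS n {2} = rv 1 False True + rv (3 * (m - 1) + 1) True True + rv (3 * m) True False"
      unfolding PS_def s1 o1 using r0 r1 la0 la1 c0 c1 e by simp
    also have "\<dots> = 8 * m" using m by (simp only: rv_3k rv_3k0; simp add: rv_def)
    finally have b: "PS n {2} = 8 * m" .
    show ?thesis using a b n m by (intro exI[of _ 2]) simp
  next
    case 2
    then have n: "n = 6 * m + 1" using nm by simp
    then have m: "m \<ge> 1" using assms(1) by simp
    have c0: "cnt n 0 = 3 * m + 1" by (rule cnt_even) (simp add: n)
    have c1: "cnt n 1 = 3 * m" by (rule cnt_odd) (simp add: n)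
    have r0: "\<not> ra n 0" and r1: "ra n 1" using c0 c1 n unfolding ra_def by simp_all
    have e: "3 * m - 1 - 1 = 3 * (m - 1) + 1" using m by simp
    have "PS n {} = rv (3 * m + 1) False False + rv (3 * m) True True"
      unfolding PS_def PSp_empty c0 c1 using r0 r1 la0 la1 by simp
    also have "\<dots> = 8 * m + 2" by (simp only: rv_3k rv_3k0; simp add: rv_def)
    finally have a: "PS n {} = 8 * m + 2" .
    have s1: "PSp n 1 {3} = rv 1 (la 1) True + rv (cnt n 1 - 1 - 1) True (ra n 1)"
      using PSp_same[of 1 n 1] c1 m by simp
    have o1: "PSp n 0 {3} = rv (cnt n 0) (la 0) (ra n 0)" using PSp_other[of 3 0 n] by simp
    have "PS n {3} = rv (3 * m + 1) False False + (rv 1 True True + rv (3 * (m - 1) + 1) True True)"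
      unfolding PS_def s1 o1 using r0 r1 la0 la1 c0 c1 e by simp
    also have "\<dots> = 8 * m + 2" using m by (simp only: rv_3k rv_3k0; simp add: rv_def)
    finally have b: "PS n {3} = 8 * m + 2" .
    show ?thesis using a b n m by (intro exI[of _ 3]) simp
  next
    case 3
    then have n: "n = 6 * m + 3" using nm by simp
    have c0: "cnt n 0 = 3 * m + 2" by (rule cnt_even) (simp add: n)
    have c1: "cnt n 1 = 3 * m + 1" by (rule cnt_odd) (simp add: n)
    have r0: "\<not> ra n 0" and r1: "ra n 1" using c0 c1 n unfolding ra_def by simp_all
    have "PS n {} = rv (3 * m + 2) False False + rv (3 * m + 1) True True"
      unfolding PS_def PSp_empty c0 c1 using r0 r1 la0 la1 by simp
    also have "\<dots> = 8 * m + 4" by (simp only: rv_3k rv_3k0; simp add: rv_def)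
    finally have a: "PS n {} = 8 * m + 4" .
    have s1: "PSp n 0 {0} = rv 0 (la 0) True + rv (cnt n 0 - 0 - 1) True (ra n 0)"
      using PSp_same[of 0 n 0] c0 by simp
    have o1: "PSp n 1 {0} = rv (cnt n 1) (la 1) (ra n 1)" using PSp_other[of 0 1 n] by simp
    have "PS n {0} = rv (3 * m + 1) True False + rv (3 * m + 1) True True"
      unfolding PS_def s1 o1 using r0 r1 la0 la1 c0 c1 by simp
    also have "\<dots> = 8 * m + 4" by (simp only: rv_3k rv_3k0; simp add: rv_def)
    finally have b: "PS n {0} = 8 * m + 4" .
    show ?thesis using a b n by (intro exI[of _ 0]) simp
  next
    case 4
    then have n: "n = 6 * m + 5" using nm by simp
    have c0: "cnt n 0 = 3 * m + 3" by (rule cnt_even) (simp add: n)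
    have c1: "cnt n 1 = 3 * m + 2" by (rule cnt_odd) (simp add: n)
    have r0: "\<not> ra n 0" and r1: "ra n 1" using c0 c1 n unfolding ra_def by simp_all
    have "PS n {} = rv (3 * m + 3) False False + rv (3 * m + 2) True True"
      unfolding PS_def PSp_empty c0 c1 using r0 r1 la0 la1 by simp
    also have "\<dots> = 8 * m + 7" by (simp only: rv_3k rv_3k0; simp add: rv_def)
    finally have a: "PS n {} = 8 * m + 7" .
    have s1: "PSp n 0 {0} = rv 0 (la 0) True + rv (cnt n 0 - 0 - 1) True (ra n 0)"
      using PSp_same[of 0 n 0] c0 by simp
    have o1: "PSp n 1 {0} = rv (cnt n 1) (la 1) (ra n 1)" using PSp_other[of 0 1 n] by simp
    have "PS n {0} = rv (3 * m + 2) True False + rv (3 * m + 2) True True"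
      unfolding PS_def s1 o1 using r0 r1 la0 la1 c0 c1 by simp
    also have "\<dots> = 8 * m + 6" by (simp only: rv_3k rv_3k0; simp add: rv_def)
    finally have b: "PS n {0} = 8 * m + 6" .
    show ?thesis using a b n by (intro exI[of _ 0]) simp
  qed
qed

theorem lemma3p8:
  fixes n :: nat
  assumes "n \<ge> 3" and "n mod 6 \<notin> {2, 4}"
  shows "\<not> gamma_tg_critical {0..<n} (path_nbr n)"
proof
  assume crit: "gamma_tg_critical {0..<n} (path_nbr n)"
  obtain v where v: "v < n" "PS n {} div 2 \<le> PS n {v} div 2" using main_ineq[OF assms] by blast
  have g: "gamma_tg {0..<n} (path_nbr n) = PS n {} div 2"
    unfolding gamma_tg_def using tg_PS[OF assms(1), of "{}"] by simp
  have gv: "gamma_tg_cond {0..<n} (path_nbr n) v = PS n {v} div 2"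
    unfolding gamma_tg_cond_def using tg_PS[OF assms(1), of "{v}"] v(1) by simp
  have "gamma_tg_cond {0..<n} (path_nbr n) v < gamma_tg {0..<n} (path_nbr n)"
    using crit v(1) unfolding gamma_tg_critical_def by simp
  then show False using g gv v(2) by simp
qed

end
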